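(* Let $\alpha\in\mathbb{N}$. Suppose $g:\mathbb{R}\to\mathbb{R}$ is such that $g^{(\tau)}$ is absolutely continuous on every compact interval for $\tau=0,\dots,\alpha-1$, and $g^{(\alpha)}\in L^2(\mathbb{R})$. Suppose further that \[ \|g\|_\alpha^*:=\sup_{I\subset\mathbb{R},\ |I|<\infty}\left(\sum_{\tau=0}^{\alpha-1}\left(\int_I g^{(\tau)}(x)\,\mathrm{d}x\right)^2+\int_I|g^{(\alpha)}(x)|^2\,\mathrm{d}x\right)^{1/2}<\infty, \] where the supremum is over intervals $I$ of finite length, and that, for some $\varepsilon\in(0,1)$, \[ \|g\|_{\alpha,\mathrm{decay}}:=\sup_{x\in\mathbb{R},\ \tau\in\{0,\dots,\alpha-1\}}\left|\mathrm{e}^{(1-\varepsilon)x^2/2}g^{(\tau)}(x)\right|<\infty. \] Then for every integer $n\geq 2$, with $T=\sqrt{\frac{2}{1-\varepsilon}\alpha\ln(n)}$, \[ \left|\int_\mathbb{R}g(x)\,\mathrm{d}x-Q_{n,T}^*(g)\right|\leq C\left(\|g\|_\alpha^*+\|g\|_{\alpha,\mathrm{decay}}\right)\frac{(\ln n)^{\alpha/2+1/4}}{n^\alpha}, \] where the constant $C$ is independent of $n$ and $g$ but depends on $\alpha$ and $\varepsilon$.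
   Context: For $T>0$ and $n\in\mathbb{N}$, the trapezoidal rule is $Q_{n,T}^*(g)=\frac{2T}{n}\sum_{j=0}^{n-1}g(\xi_j^* )$ with $\xi_j^*=\frac{2T}{n}j-T$, $j=0,\dots,n-1$. *)

theory Defs
  imports "HOL-Analysis.Analysis"
begin

definition abs_cont_on :: "real set \<Rightarrow> (real \<Rightarrow> real) \<Rightarrow> bool" where
  "abs_cont_on S f \<longleftrightarrow>
     (\<forall>e>0. \<exists>\<delta>>0. \<forall>(m::nat) (a::nat \<Rightarrow> real) (b::nat \<Rightarrow> real).
        (\<forall>i<m. a i \<le> b i \<and> {a i..b i} \<subseteq> S) \<and>
        disjoint_family_on (\<lambda>i. {a i<..<b i}) {..<m} \<and>
        (\<Sum>i<m. b i - a i) < \<delta>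
        \<longrightarrow> (\<Sum>i<m. \<bar>f (b i) - f (a i)\<bar>) < e)"

definition trap_rule :: "nat \<Rightarrow> real \<Rightarrow> (real \<Rightarrow> real) \<Rightarrow> real" where
  "trap_rule n T g = (2 * T / real n) * (\<Sum>j<n. g (2 * T / real n * real j - T))"

text \<open>The quantity under the supremum in the norm, for the finite interval [a,b];
  d \<tau> stands for the \<tau>-th derivative.\<close>
definition star_term :: "nat \<Rightarrow> (nat \<Rightarrow> real \<Rightarrow> real) \<Rightarrow> real \<Rightarrow> real \<Rightarrow> real" where
  "star_term \<alpha> d a b =
     sqrt ((\<Sum>\<tau><\<alpha>. (set_lebesgue_integral lborel {a..b} (d \<tau>))\<^sup>2)
           + set_lebesgue_integral lborel {a..b} (\<lambda>x. \<bar>d \<alpha> x\<bar>\<^sup>2))"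

definition star_set :: "nat \<Rightarrow> (nat \<Rightarrow> real \<Rightarrow> real) \<Rightarrow> real set" where
  "star_set \<alpha> d = {star_term \<alpha> d a b | a b. a \<le> b}"

definition star_norm :: "nat \<Rightarrow> (nat \<Rightarrow> real \<Rightarrow> real) \<Rightarrow> real" where
  "star_norm \<alpha> d = Sup (star_set \<alpha> d)"

definition decay_set :: "nat \<Rightarrow> real \<Rightarrow> (nat \<Rightarrow> real \<Rightarrow> real) \<Rightarrow> real set" where
  "decay_set \<alpha> \<epsilon> d = {\<bar>exp ((1 - \<epsilon>) * x\<^sup>2 / 2) * d \<tau> x\<bar> | x \<tau>. \<tau> < \<alpha>}"

definition decay_norm :: "nat \<Rightarrow> real \<Rightarrow> (nat \<Rightarrow> real \<Rightarrow> real) \<Rightarrow> real" where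
  "decay_norm \<alpha> \<epsilon> d = Sup (decay_set \<alpha> \<epsilon> d)"

end

theory Submission
  imports Defs
begin

lemma ac_single:
  assumes "abs_cont_on S F" "e > 0"
  obtains \<delta> where "\<delta> > 0" "\<And>x y. x \<le> y \<Longrightarrow> {x..y} \<subseteq> S \<Longrightarrow> y - x < \<delta> \<Longrightarrow> \<bar>F y - F x\<bar> < e"
proof -
  obtain \<delta> where d: "\<delta> > 0" and H: "\<And>(m::nat) (a::nat \<Rightarrow> real) b. (\<forall>i<m. a i \<le> b i \<and> {a i..b i} \<subseteq> S) \<and>
        disjoint_family_on (\<lambda>i. {a i<..<b i}) {..<m} \<and>
        (\<Sum>i<m. b i - a i) < \<delta>
        \<Longrightarrow> (\<Sum>i<m. \<bar>F (b i) - F (a i)\<bar>) < e"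
    using assms unfolding abs_cont_on_def by meson
  show ?thesis
  proof (rule that[OF d])
    fix x y :: real assume "x \<le> y" "{x..y} \<subseteq> S" "y - x < \<delta>"
    then show "\<bar>F y - F x\<bar> < e"
      using H[of 1 "\<lambda>_. x" "\<lambda>_. y"] by (simp add: disjoint_family_on_def)
  qed
qed

lemma ac_continuous:
  assumes "abs_cont_on {a..b} F"
  shows "continuous_on {a..b} F"
  unfolding continuous_on_iff
proof (intro ballI allI impI)
  fix x e :: real assume x: "x \<in> {a..b}" and e: "0 < e"
  obtain \<delta> where d: "\<delta> > 0" and H: "\<And>x y. x \<le> y \<Longrightarrow> {x..y} \<subseteq> {a..b} \<Longrightarrow> y - x < \<delta> \<Longrightarrow> \<bar>F y - F x\<bar> < e"
    using ac_single[OF assms e] by blast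
  show "\<exists>d>0. \<forall>x'\<in>{a..b}. dist x' x < d \<longrightarrow> dist (F x') (F x) < e"
  proof (intro exI[of _ \<delta>] conjI ballI impI d)
    fix y assume y: "y \<in> {a..b}" "dist y x < \<delta>"
    show "dist (F y) (F x) < e"
    proof (cases "x \<le> y")
      case True then show ?thesis using H[of x y] x y by (auto simp: dist_real_def)
    next
      case False then show ?thesis using H[of y x] x y by (auto simp: dist_real_def)
    qed
  qed
qed


lemma negl_inter_boxes:
  fixes u1 v1 u2 v2 :: real
  assumes "interior {u1..v1} \<inter> interior {u2..v2} = {}"
  shows "negligible ({u1..v1} \<inter> {u2..v2})"
proof -
  have "{u1..v1} \<inter> {u2..v2} \<subseteq> (cbox u1 v1 - box u1 v1) \<union> (cbox u2 v2 - box u2 v2)"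
  proof
    fix z assume z: "z \<in> {u1..v1} \<inter> {u2..v2}"
    show "z \<in> (cbox u1 v1 - box u1 v1) \<union> (cbox u2 v2 - box u2 v2)"
    proof (rule ccontr)
      assume "\<not> ?thesis"
      then have "z \<in> box u1 v1" "z \<in> box u2 v2" using z by auto
      then show False using assms by (metis interior_cbox cbox_interval disjoint_iff)
    qed
  qed
  moreover have "negligible ((cbox u1 v1 - box u1 v1) \<union> (cbox u2 v2 - box u2 v2))"
    by (intro negligible_Un negligible_frontier_interval)
  ultimately show ?thesis using negligible_subset by blast
qed

lemma small_open_cover:
  assumes "negligible N" "\<delta> > 0"
  obtains U where "open U" "N \<subseteq> U" "U \<in> lmeasurable" "measure lebesgue U < \<delta>"
proof -
  have N: "N \<in> sets lebesgue" "N \<in> lmeasurable" "measure lebesgue N = 0"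
    using assms(1) negligible_iff_measure fmeasurableD by blast+
  obtain T where T: "open T" "N \<subseteq> T" "(T - N) \<in> lmeasurable" "emeasure lebesgue (T - N) < ennreal \<delta>"
    using sets_lebesgue_outer_open[OF N(1) assms(2)] by blast
  have TU: "T = (T - N) \<union> N" using T by auto
  have Tm: "T \<in> lmeasurable" using T(3) N(2) TU by (metis fmeasurable.Un)
  have "measure lebesgue T \<le> measure lebesgue (T - N) + measure lebesgue N"
    using TU by (metis N(2) T(3) measure_Un_le fmeasurableD)
  moreover have "measure lebesgue (T - N) < \<delta>"
    using T(3,4) assms(2) by (metis emeasure_eq_measure2 ennreal_less_iff measure_nonneg)
  ultimately show ?thesis using that[OF T(1,2) Tm] N(3) by linarith
qed


lemma ac_ftc_aux:
  fixes F f :: "real \<Rightarrow> real"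
  assumes ab: "a < b" and ac: "abs_cont_on {a..b} F" and N: "negligible N"
    and der: "\<And>x. x \<notin> N \<Longrightarrow> (F has_real_derivative f x) (at x)"
  shows "((\<lambda>x. if x \<in> N then 0 else f x) has_integral (F b - F a)) {a..b}"
  unfolding has_integral_factor_content_real
proof (intro allI impI)
  fix e :: real assume e: "e > 0"
  let ?h = "\<lambda>x. if x \<in> N then 0 else f x"
  have cab: "measure lborel {a..b} = b - a" using ab by simp
  have "\<forall>x. \<exists>d>0. x \<notin> N \<longrightarrow> (\<forall>y. norm (y - x) < d \<longrightarrow> norm (F y - F x - (y - x) * f x) \<le> e/2 * norm (y - x))"
  proof
    fix x show "\<exists>d>0. x \<notin> N \<longrightarrow> (\<forall>y. norm (y - x) < d \<longrightarrow> norm (F y - F x - (y - x) * f x) \<le> e/2 * norm (y - x))"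
    proof (cases "x \<in> N")
      case True then show ?thesis by (intro exI[of _ 1]) auto
    next
      case False
      have "(F has_derivative (\<lambda>u. u * f x)) (at x)"
        using der[OF False] by (simp add: has_field_derivative_def mult.commute[of _ "f x"])
      then have "\<exists>d>0. \<forall>y. norm (y - x) < d \<longrightarrow> norm (F y - F x - (y - x) * f x) \<le> e/2 * norm (y - x)"
        unfolding has_derivative_at_alt using e by (meson half_gt_zero)
      then show ?thesis by blast
    qed
  qed
  then obtain d where d: "\<And>x. d x > 0"
    and dH: "\<And>x y. x \<notin> N \<Longrightarrow> norm (y - x) < d x \<Longrightarrow> norm (F y - F x - (y - x) * f x) \<le> e/2 * norm (y - x)"
    by metis
  have e2: "e * (b - a) / 2 > 0" using e ab by simp
  obtain \<delta> where \<delta>: "\<delta> > 0" and acH: "\<And>(m::nat) (a'::nat \<Rightarrow> real) b'. (\<forall>i<m. a' i \<le> b' i \<and> {a' i..b' i} \<subseteq> {a..b}) \<and>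
        disjoint_family_on (\<lambda>i. {a' i<..<b' i}) {..<m} \<and>
        (\<Sum>i<m. b' i - a' i) < \<delta>
        \<Longrightarrow> (\<Sum>i<m. \<bar>F (b' i) - F (a' i)\<bar>) < e * (b - a) / 2"
    using ac e2 unfolding abs_cont_on_def by meson
  obtain U where U: "open U" "N \<subseteq> U" "U \<in> lmeasurable" "measure lebesgue U < \<delta>"
    using small_open_cover[OF N \<delta>] by blast
  have "\<forall>x. \<exists>r>0. x \<in> N \<longrightarrow> ball x r \<subseteq> U"
    using U(1,2) open_contains_ball by blast
  then obtain r where r: "\<And>x. r x > 0" and rU: "\<And>x. x \<in> N \<Longrightarrow> ball x (r x) \<subseteq> U"
    by metis
  define \<gamma> where "\<gamma> x = (if x \<in> N then ball x (r x) else ball x (d x))" for x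
  have g: "gauge \<gamma>" unfolding \<gamma>_def gauge_def using r d by auto
  show "\<exists>\<gamma>. gauge \<gamma> \<and> (\<forall>p. p tagged_division_of {a..b} \<and> \<gamma> fine p \<longrightarrow>
      norm ((\<Sum>(x, k)\<in>p. measure lborel k *\<^sub>R ?h x) - (F b - F a)) \<le> e * measure lborel {a..b})"
  proof (intro exI[of _ \<gamma>] conjI g allI impI)
    fix p assume "p tagged_division_of {a..b} \<and> \<gamma> fine p"
    then have p: "p tagged_division_of {a..b}" and fine: "\<gamma> fine p" by auto
    have finp: "finite p" using p by blast
    have Fba: "F b - F a = (\<Sum>(x,K)\<in>p. F (Sup K) - F (Inf K))"
      using additive_tagged_division_1[OF less_imp_le[OF ab] p, of F] by simp
    have Kform: "\<exists>u v. K = {u..v} \<and> u \<le> x \<and> x \<le> v \<and> {u..v} \<subseteq> {a..b} \<and> Inf K = u \<and> Sup K = v \<and> measure lborel K = v - u"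
      if xKp: "(x,K) \<in> p" for x K
    proof -
      obtain u v where K: "K = cbox u v" using tagged_division_ofD(4)[OF p xKp] by blast
      have "x \<in> K" "K \<subseteq> {a..b}" using p xKp by (auto dest: tagged_division_ofD(2,3))
      then show ?thesis using K by (intro exI[of _ u] exI[of _ v]) auto
    qed
    define p1 where "p1 = {y\<in>p. fst y \<in> N}"
    define p2 where "p2 = {y\<in>p. fst y \<notin> N}"
    have p12: "p = p1 \<union> p2" "p1 \<inter> p2 = {}" "finite p1" "finite p2"
      using finp by (auto simp: p1_def p2_def)
    define \<phi> where "\<phi> = (\<lambda>(x,K). measure lborel K * ?h x - (F (Sup K) - F (Inf K)))"
    have "(\<Sum>(x, k)\<in>p. measure lborel k *\<^sub>R ?h x) - (F b - F a) = (\<Sum>y\<in>p. \<phi> y)"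
      unfolding Fba \<phi>_def by (simp add: sum_subtractf[symmetric] split_def)
    also have "\<dots> = (\<Sum>y\<in>p1. \<phi> y) + (\<Sum>y\<in>p2. \<phi> y)"
      using p12 by (simp add: sum.union_disjoint)
    finally have split: "(\<Sum>(x, k)\<in>p. measure lborel k *\<^sub>R ?h x) - (F b - F a) = (\<Sum>y\<in>p1. \<phi> y) + (\<Sum>y\<in>p2. \<phi> y)" .
    have bound2: "\<bar>\<Sum>y\<in>p2. \<phi> y\<bar> \<le> e/2 * (b - a)"
    proof -
      have "\<bar>\<Sum>y\<in>p2. \<phi> y\<bar> \<le> (\<Sum>y\<in>p2. \<bar>\<phi> y\<bar>)" by (rule sum_abs)
      also have "\<dots> \<le> (\<Sum>(x,K)\<in>p2. e/2 * measure lborel K)"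
      proof (rule sum_mono)
        fix y assume y: "y \<in> p2"
        obtain x K where yx: "y = (x,K)" by fastforce
        have xK: "(x,K) \<in> p" "x \<notin> N" using y yx by (auto simp: p2_def)
        obtain u v where uv: "K = {u..v}" "u \<le> x" "x \<le> v" "Inf K = u" "Sup K = v" "measure lborel K = v - u"
          using Kform[OF xK(1)] by blast
        have sub: "K \<subseteq> ball x (d x)" using fine xK unfolding fine_def \<gamma>_def by fastforce
        have du: "norm (u - x) < d x" "norm (v - x) < d x"
          using sub uv subsetD[OF sub, of u] subsetD[OF sub, of v] by (auto simp: dist_real_def)
        have "\<bar>\<phi> y\<bar> = \<bar>(F u - F x - (u - x) * f x) - (F v - F x - (v - x) * f x)\<bar>"
          unfolding \<phi>_def yx using uv xK by (simp add: algebra_simps)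
        also have "\<dots> \<le> norm (F u - F x - (u - x) * f x) + norm (F v - F x - (v - x) * f x)"
          by (simp add: abs_triangle_ineq4)
        also have "\<dots> \<le> e/2 * norm (u - x) + e/2 * norm (v - x)"
          using dH[OF xK(2) du(1)] dH[OF xK(2) du(2)] by linarith
        also have "\<dots> = e/2 * measure lborel K" using uv by (simp add: field_simps)
        finally show "\<bar>\<phi> y\<bar> \<le> (case y of (x, K) \<Rightarrow> e / 2 * measure lborel K)" using yx by simp
      qed
      also have "\<dots> = e/2 * (\<Sum>(x,K)\<in>p2. measure lborel K)" by (simp add: sum_distrib_left split_def)
      also have "\<dots> \<le> e/2 * (\<Sum>(x,K)\<in>p. measure lborel K)"
        using e p12 by (intro mult_left_mono sum_mono2) (auto simp: split_def)
      also have "(\<Sum>(x,K)\<in>p. measure lborel K) = b - a"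
        using additive_content_tagged_division[of p a b] p ab by simp
      finally show ?thesis .
    qed
    have bound1: "\<bar>\<Sum>y\<in>p1. \<phi> y\<bar> < e/2 * (b - a)"
    proof -
      have phi1: "\<phi> y = - (F (Sup (snd y)) - F (Inf (snd y)))" if "y \<in> p1" for y
        using that by (auto simp: \<phi>_def p1_def split: prod.splits)
      obtain en where en: "bij_betw en {0..<card p1} p1" using ex_bij_betw_nat_finite[OF p12(3)] by blast
      define m where "m = card p1"
      define a' where "a' i = Inf (snd (en i))" for i
      define b' where "b' i = Sup (snd (en i))" for i
      have memb: "en i \<in> p1" if "i < m" for i using en that unfolding m_def bij_betw_def by auto
      have form: "snd (en i) = {a' i..b' i} \<and> a' i \<le> b' i \<and> {a' i..b' i} \<subseteq> {a..b} \<and> measure lborel (snd (en i)) = b' i - a' i" if "i < m" for i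
      proof -
        obtain x K where xk: "en i = (x,K)" by fastforce
        have "(x,K) \<in> p" using memb[OF that] xk by (auto simp: p1_def)
        then obtain u v where "K = {u..v} \<and> u \<le> x \<and> x \<le> v \<and> {u..v} \<subseteq> {a..b} \<and> Inf K = u \<and> Sup K = v \<and> measure lborel K = v - u"
          using Kform[of x K] by blast
        then show ?thesis using xk unfolding a'_def b'_def by simp
      qed
      have sum_eq: "(\<Sum>i<m. G (en i)) = (\<Sum>y\<in>p1. G y)" for G :: "real \<times> real set \<Rightarrow> real"
        using sum.reindex_bij_betw[OF en, of G] by (simp add: m_def atLeast0LessThan)
      have disj: "disjoint_family_on (\<lambda>i. {a' i<..<b' i}) {..<m}"
        unfolding disjoint_family_on_def
      proof (intro ballI impI)
        fix i j assume ij: "i \<in> {..<m}" "j \<in> {..<m}" "i \<noteq> j"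
        then have "en i \<noteq> en j" using en unfolding bij_betw_def inj_on_def m_def by auto
        moreover have "en i \<in> p" "en j \<in> p" using memb ij by (auto simp: p1_def)
        ultimately have "interior (snd (en i)) \<inter> interior (snd (en j)) = {}"
          using tagged_division_ofD(5)[OF p] by (metis prod.collapse)
        then show "{a' i<..<b' i} \<inter> {a' j<..<b' j} = {}" using form ij by simp
      qed
      have lmU: "(\<Sum>i<m. b' i - a' i) < \<delta>"
      proof -
        have "(\<Sum>i<m. b' i - a' i) = (\<Sum>y\<in>p1. measure lebesgue (snd y))"
        proof -
          have "(\<Sum>i<m. b' i - a' i) = (\<Sum>i<m. measure lebesgue (snd (en i)))"
            using form by (intro sum.cong) (auto simp: measure_completion)
          then show ?thesis using sum_eq by simp
        qed
        also have "\<dots> = measure lebesgue (\<Union>(snd ` p1))"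
        proof (rule measure_negligible_finite_Union_image[symmetric, OF p12(3)])
          fix y assume "y \<in> p1"
          then obtain u v where "snd y = {u..v}" using Kform[of "fst y" "snd y"] by (auto simp: p1_def)
          then show "snd y \<in> lmeasurable" by simp
        next
          show "pairwise (\<lambda>y z. negligible (snd y \<inter> snd z)) p1"
            unfolding pairwise_def
          proof (intro ballI impI)
            fix y z assume yz: "y \<in> p1" "z \<in> p1" "y \<noteq> z"
            then have yzp: "y \<in> p" "z \<in> p" by (auto simp: p1_def)
            then have int: "interior (snd y) \<inter> interior (snd z) = {}"
              using tagged_division_ofD(5)[OF p] yz(3) by (metis prod.collapse)
            obtain u1 v1 where 1: "snd y = {u1..v1}" using Kform[of "fst y" "snd y"] yzp by auto
            obtain u2 v2 where 2: "snd z = {u2..v2}" using Kform[of "fst z" "snd z"] yzp by auto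
            show "negligible (snd y \<inter> snd z)" using negl_inter_boxes[of u1 v1 u2 v2] int 1 2 by simp
          qed
        qed
        also have "\<dots> \<le> measure lebesgue U"
        proof (rule measure_mono_fmeasurable)
          show "\<Union>(snd ` p1) \<subseteq> U"
          proof
            fix z assume "z \<in> \<Union>(snd ` p1)"
            then obtain x K where xK: "(x,K) \<in> p1" "z \<in> K" by auto
            then have "K \<subseteq> ball x (r x)" using fine unfolding fine_def \<gamma>_def p1_def by fastforce
            then show "z \<in> U" using rU xK by (auto simp: p1_def)
          qed
          show "\<Union>(snd ` p1) \<in> sets lebesgue"
          proof (intro sets.finite_Union)
            show "finite (snd ` p1)" using p12(3) by simp
            show "snd ` p1 \<subseteq> sets lebesgue"
            proof
              fix K assume "K \<in> snd ` p1"
              then obtain x where "(x,K) \<in> p" by (auto simp: p1_def)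
              then obtain u v where "K = {u..v}" using Kform[of x K] by auto
              then show "K \<in> sets lebesgue" by simp
            qed
          qed
          show "U \<in> lmeasurable" by (rule U(3))
        qed
        finally show ?thesis using U(4) by linarith
      qed
      have "\<bar>\<Sum>y\<in>p1. \<phi> y\<bar> \<le> (\<Sum>y\<in>p1. \<bar>F (Sup (snd y)) - F (Inf (snd y))\<bar>)"
        using phi1 by (metis (no_types, lifting) abs_minus_cancel sum.cong sum_abs)
      also have "\<dots> = (\<Sum>i<m. \<bar>F (b' i) - F (a' i)\<bar>)"
        using sum_eq[of "\<lambda>y. \<bar>F (Sup (snd y)) - F (Inf (snd y))\<bar>"] by (simp add: a'_def b'_def)
      also have "\<dots> < e * (b - a) / 2"
        using acH[of m a' b'] form disj lmU by auto
      finally show ?thesis by simp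
    qed
    show "norm ((\<Sum>(x, k)\<in>p. measure lborel k *\<^sub>R ?h x) - (F b - F a)) \<le> e * measure lborel {a..b}"
      unfolding split cab using bound1 bound2 by (simp add: algebra_simps)
  qed
qed

lemma ac_ftc:
  fixes F f :: "real \<Rightarrow> real"
  assumes ab: "a \<le> b" and ac: "abs_cont_on {a..b} F" and N: "negligible N"
    and der: "\<And>x. x \<notin> N \<Longrightarrow> (F has_real_derivative f x) (at x)"
  shows "(f has_integral (F b - F a)) {a..b}"
proof (cases "a = b")
  case True then show ?thesis using has_integral_refl(2)[of f b] by simp
next
  case False
  then have "a < b" using ab by simp
  from ac_ftc_aux[OF this ac N der] show ?thesis
    by (rule has_integral_spike[OF N, rotated]) auto
qed


primrec Pk :: "nat \<Rightarrow> real \<Rightarrow> real" where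
  "Pk 0 = (\<lambda>t. 1)"
| "Pk (Suc k) = (\<lambda>t. integral {0..t} (Pk k) - integral {0..1} (\<lambda>s. integral {0..s} (Pk k)))"

lemma Pk_cont: "continuous_on {0..1} (Pk k)"
proof (induction k)
  case 0 then show ?case by simp
next
  case (Suc k)
  have "continuous_on {0..1} (\<lambda>t. integral {0..t} (Pk k))"
    by (rule indefinite_integral_continuous_1[OF integrable_continuous_real[OF Suc]])
  then show ?case by (simp add: continuous_on_diff)
qed

lemma Pk_deriv:
  assumes "t \<in> {0..1}"
  shows "(Pk (Suc k) has_real_derivative Pk k t) (at t within {0..1})"
proof -
  have "((\<lambda>u. integral {0..u} (Pk k)) has_vector_derivative Pk k t) (at t within {0..1})"
    by (rule integral_has_vector_derivative[OF Pk_cont assms])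
  then have "((\<lambda>u. integral {0..u} (Pk k)) has_real_derivative Pk k t) (at t within {0..1})"
    by (simp add: has_real_derivative_iff_has_vector_derivative)
  then have "((\<lambda>u. integral {0..u} (Pk k) - integral {0..1} (\<lambda>s. integral {0..s} (Pk k))) has_real_derivative Pk k t - 0) (at t within {0..1})"
    by (intro DERIV_diff DERIV_const)
  then show ?thesis by simp
qed

lemma Pk_bound: "t \<in> {0..1} \<Longrightarrow> \<bar>Pk k t\<bar> \<le> 2 ^ k"
proof (induction k arbitrary: t)
  case 0 then show ?case by simp
next
  case (Suc k)
  have I1: "\<bar>integral {0..s} (Pk k)\<bar> \<le> 2 ^ k" if s: "s \<in> {0..1}" for s
  proof -
    have "(Pk k has_integral integral {0..s} (Pk k)) {0..s}"
      using integrable_continuous_real[OF continuous_on_subset[OF Pk_cont, of "{0..s}"]] s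
      by (auto intro!: integrable_integral)
    then have "norm (integral {0..s} (Pk k)) \<le> 2 ^ k * measure lborel {0..s}"
      by (intro has_integral_bound[where B="2^k" and f="Pk k", unfolded box_real]) (use Suc.IH s in auto)
    then have "\<bar>integral {0..s} (Pk k)\<bar> \<le> 2^k * s" using s by simp
    moreover have "(2::real)^k * s \<le> 2^k * 1" using s by (intro mult_left_mono) auto
    ultimately show ?thesis by linarith
  qed
  have cI: "continuous_on {0..1} (\<lambda>s. integral {0..s} (Pk k))"
    by (rule indefinite_integral_continuous_1[OF integrable_continuous_real[OF Pk_cont]])
  have "norm (integral {0..1} (\<lambda>s. integral {0..s} (Pk k))) \<le> 2 ^ k * measure lborel {0..1::real}"
    using has_integral_bound[where B="2^k" and f="\<lambda>s. integral {0..s} (Pk k)" and a=0 and b=1, unfolded box_real,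
        OF _ integrable_integral[OF integrable_continuous_real[OF cI]]] I1 by auto
  then have I2: "\<bar>integral {0..1} (\<lambda>s. integral {0..s} (Pk k))\<bar> \<le> 2 ^ k" by simp
  show ?case using I1[OF Suc.prems] I2 by simp
qed

lemma Pk_int_has: "(Pk k has_integral integral {0..1} (Pk k)) {0..1}"
  by (intro integrable_integral integrable_continuous_real Pk_cont)

lemma Pk_diff: "Pk (Suc k) 1 - Pk (Suc k) 0 = integral {0..1} (Pk k)"
  by simp

lemma Pk_int_zero: "integral {0..1} (Pk (Suc k)) = 0"
proof -
  have cI: "continuous_on {0..1} (\<lambda>s. integral {0..s} (Pk k))"
    by (rule indefinite_integral_continuous_1[OF integrable_continuous_real[OF Pk_cont]])
  have "integral {0..1} (Pk (Suc k)) = integral {0..1} (\<lambda>s. integral {0..s} (Pk k)) - integral {0..1::real} (\<lambda>_. integral {0..1} (\<lambda>s. integral {0..s} (Pk k)))"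
      proof -
    have "integral {0..1} (\<lambda>t. integral {0..t} (Pk k) - C) = integral {0..1} (\<lambda>t. integral {0..t} (Pk k)) - integral {0..1::real} (\<lambda>t. C)" for C
      by (rule Henstock_Kurzweil_Integration.integral_diff) (auto intro: integrable_continuous_real cI)
    then show ?thesis by (simp add: integral_const_real)
  qed
  then show ?thesis by simp
qed

lemma Pk_periodic: "k \<ge> 2 \<Longrightarrow> Pk k 1 = Pk k 0"
proof -
  assume "k \<ge> 2"
  then obtain j where k: "k = Suc (Suc j)" by (metis add_2_eq_Suc le_Suc_ex)
  show ?thesis using Pk_diff[of "Suc j"] Pk_int_zero[of j] k by simp
qed

lemma Pk1: "Pk 1 1 = 1/2" "Pk 1 0 = -1/2"
proof -
  have i1: "integral {0..s} (Pk 0) = s" if "s \<ge> 0" for s :: real using that by simp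
  have "integral {0..1} (\<lambda>s. integral {0..s} (Pk 0)) = integral {0..1} (\<lambda>s::real. s)"
    by (intro integral_cong) (auto simp: i1)
  also have "\<dots> = 1/2"
  proof -
    have "((\<lambda>s::real. s) has_integral (1^2/2 - 0^2/2)) {0..1}"
      by (intro fundamental_theorem_of_calculus) (auto intro!: derivative_eq_intros simp: has_real_derivative_iff_has_vector_derivative[symmetric])
    then show ?thesis by (simp add: integral_unique)
  qed
  finally have c: "integral {0..1} (\<lambda>s. integral {0..s} (Pk 0)) = 1/2" .
  show "Pk 1 1 = 1/2" "Pk 1 0 = -1/2" using c by (simp_all add: i1)
qed

lemma Pk1': "Pk (Suc 0) 1 = 1/2" "Pk (Suc 0) 0 = -1/2" using Pk1 by simp_all

declare Pk.simps(2)[simp del]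


locale setting =
  fixes \<alpha> :: nat and \<epsilon> :: real and d :: "nat \<Rightarrow> real \<Rightarrow> real"
  assumes alpha: "\<alpha> \<ge> 1" and eps: "0 < \<epsilon>" "\<epsilon> < 1"
    and ac: "\<forall>\<tau><\<alpha>. \<forall>a b. abs_cont_on {a..b} (d \<tau>)"
    and der: "\<forall>\<tau><\<alpha>. AE x in lborel. (d \<tau> has_real_derivative d (Suc \<tau>) x) (at x)"
    and meas: "d \<alpha> \<in> borel_measurable lborel"
    and int2: "integrable lborel (\<lambda>x. (d \<alpha> x)\<^sup>2)"
    and bddS: "bdd_above (star_set \<alpha> d)"
    and bddD: "bdd_above (decay_set \<alpha> \<epsilon> d)"
begin

lemma dcont_at: "\<tau> < \<alpha> \<Longrightarrow> isCont (d \<tau>) x"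
proof -
  assume t: "\<tau> < \<alpha>"
  have "continuous_on {x-1..x+1} (d \<tau>)" using ac t ac_continuous by blast
  moreover have "x \<in> interior {x-1..x+1}" by simp
  ultimately show ?thesis using continuous_on_interior by blast
qed

lemma dcont: "\<tau> < \<alpha> \<Longrightarrow> continuous_on S (d \<tau>)"
  using dcont_at continuous_at_imp_continuous_on by blast

lemma dftc:
  assumes "\<tau> < \<alpha>" "a \<le> b"
  shows "(d (Suc \<tau>) has_integral (d \<tau> b - d \<tau> a)) {a..b}"
proof -
  have ae: "AE x in lborel. (d \<tau> has_real_derivative d (Suc \<tau>) x) (at x)" using der assms(1) by blast
  from ae obtain N where N: "{x \<in> space lborel. \<not> (d \<tau> has_real_derivative d (Suc \<tau>) x) (at x)} \<subseteq> N"
    "emeasure lborel N = 0" "N \<in> sets lborel"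
    by (rule AE_E)
  have "N \<in> null_sets lborel" using N by auto
  then have "N \<in> null_sets lebesgue" by (rule null_sets_completionI)
  then have negl: "negligible N" using negligible_iff_null_sets by blast
  show ?thesis
  proof (rule ac_ftc[OF assms(2) _ negl])
    show "abs_cont_on {a..b} (d \<tau>)" using ac assms by blast
    fix x assume "x \<notin> N" then show "(d \<tau> has_real_derivative d (Suc \<tau>) x) (at x)" using N(1) by auto
  qed
qed

lemma dint: "\<tau> < \<alpha> \<Longrightarrow> d (Suc \<tau>) integrable_on {a..b}"
proof (cases "a \<le> b")
  case True
  assume "\<tau> < \<alpha>" then show ?thesis using dftc True by blast
next
  case False then show ?thesis by (simp add: integrable_on_empty)
qed

lemma dderiv:
  assumes "Suc \<tau> < \<alpha>"
  shows "(d \<tau> has_real_derivative d (Suc \<tau>) x) (at x)"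
proof -
  let ?a = "x - 1" and ?b = "x + 1"
  have c: "continuous_on {?a..?b} (d (Suc \<tau>))" using dcont assms by blast
  have "((\<lambda>u. integral {?a..u} (d (Suc \<tau>))) has_vector_derivative d (Suc \<tau>) x) (at x within {?a..?b})"
    by (rule integral_has_vector_derivative[OF c]) auto
  then have "((\<lambda>u. integral {?a..u} (d (Suc \<tau>))) has_real_derivative d (Suc \<tau>) x) (at x within {?a..?b})"
    by (simp add: has_real_derivative_iff_has_vector_derivative)
  then have "((\<lambda>u. integral {?a..u} (d (Suc \<tau>))) has_real_derivative d (Suc \<tau>) x) (at x within {?a<..<?b})"
    by (rule DERIV_subset) auto
  then have "((\<lambda>u. integral {?a..u} (d (Suc \<tau>))) has_real_derivative d (Suc \<tau>) x) (at x)"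
    using at_within_open[of x "{?a<..<?b}"] by simp
  then have "((\<lambda>u. d \<tau> ?a + integral {?a..u} (d (Suc \<tau>))) has_real_derivative 0 + d (Suc \<tau>) x) (at x)"
    by (intro DERIV_add DERIV_const)
  then have D: "((\<lambda>u. d \<tau> ?a + integral {?a..u} (d (Suc \<tau>))) has_real_derivative d (Suc \<tau>) x) (at x)" by simp
  show ?thesis
  proof (rule has_field_derivative_transform_within_open[OF D, of "{?a<..<?b}"])
    fix y assume y: "y \<in> {?a<..<?b}"
    have "integral {?a..y} (d (Suc \<tau>)) = d \<tau> y - d \<tau> ?a"
      using dftc[of \<tau> ?a y] assms y by (auto intro: integral_unique)
    then show "d \<tau> ?a + integral {?a..y} (d (Suc \<tau>)) = d \<tau> y" by simp
  qed auto
qed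

definition "Dn = decay_norm \<alpha> \<epsilon> d"
definition "Sn = star_norm \<alpha> d"

lemma decay:
  assumes "\<tau> < \<alpha>"
  shows "\<bar>d \<tau> x\<bar> \<le> Dn * exp (-((1 - \<epsilon>) * x\<^sup>2 / 2))"
proof -
  have "\<bar>exp ((1 - \<epsilon>) * x\<^sup>2 / 2) * d \<tau> x\<bar> \<in> decay_set \<alpha> \<epsilon> d"
    unfolding decay_set_def using assms by blast
  then have "\<bar>exp ((1 - \<epsilon>) * x\<^sup>2 / 2) * d \<tau> x\<bar> \<le> Dn"
    unfolding Dn_def decay_norm_def by (rule cSup_upper[OF _ bddD])
  then have "exp ((1 - \<epsilon>) * x\<^sup>2 / 2) * \<bar>d \<tau> x\<bar> \<le> Dn" by (simp add: abs_mult)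
  then have "\<bar>d \<tau> x\<bar> \<le> Dn / exp ((1 - \<epsilon>) * x\<^sup>2 / 2)" by (simp add: field_simps)
  then show ?thesis by (simp add: exp_minus field_simps)
qed

lemma Dn_nonneg: "Dn \<ge> 0"
  proof -
  have "\<bar>d 0 0\<bar> \<le> Dn * exp (-((1 - \<epsilon>) * 0\<^sup>2 / 2))" using decay[of 0 0] alpha by simp
  then show ?thesis by simp
qed

end

context setting begin

lemma star_le: "a \<le> b \<Longrightarrow> star_term \<alpha> d a b \<le> Sn"
  unfolding Sn_def star_norm_def by (rule cSup_upper[OF _ bddS]) (auto simp: star_set_def)

lemma sq_setint: "set_integrable lborel {a..b} (\<lambda>x. (d \<alpha> x)\<^sup>2)"
  unfolding set_integrable_def by (rule integrable_mult_indicator[OF _ int2]) auto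

lemma L2_le:
  assumes "a \<le> b"
  shows "integral {a..b} (\<lambda>x. (d \<alpha> x)\<^sup>2) \<le> Sn\<^sup>2" "Sn \<ge> 0"
proof -
  have eq: "set_lebesgue_integral lborel {a..b} (\<lambda>x. \<bar>d \<alpha> x\<bar>\<^sup>2) = integral {a..b} (\<lambda>x. (d \<alpha> x)\<^sup>2)"
    using set_borel_integral_eq_integral(2)[OF sq_setint] by simp
  have I0: "integral {a..b} (\<lambda>x. (d \<alpha> x)\<^sup>2) \<ge> 0"
    by (rule integral_nonneg[OF set_borel_integral_eq_integral(1)[OF sq_setint]]) auto
  have S0: "(\<Sum>\<tau><\<alpha>. (set_lebesgue_integral lborel {a..b} (d \<tau>))\<^sup>2) \<ge> 0" by (simp add: sum_nonneg)
  have st: "star_term \<alpha> d a b = sqrt ((\<Sum>\<tau><\<alpha>. (set_lebesgue_integral lborel {a..b} (d \<tau>))\<^sup>2) + integral {a..b} (\<lambda>x. (d \<alpha> x)\<^sup>2))"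
    unfolding star_term_def eq ..
  have "sqrt (integral {a..b} (\<lambda>x. (d \<alpha> x)\<^sup>2)) \<le> star_term \<alpha> d a b"
    unfolding st using S0 by simp
  also have "\<dots> \<le> Sn" using star_le[OF assms] .
  finally have le: "sqrt (integral {a..b} (\<lambda>x. (d \<alpha> x)\<^sup>2)) \<le> Sn" .
  then show "Sn \<ge> 0" using real_sqrt_ge_zero[OF I0] by linarith
  from le I0 show "integral {a..b} (\<lambda>x. (d \<alpha> x)\<^sup>2) \<le> Sn\<^sup>2"
    by (metis real_sqrt_le_iff real_sqrt_pow2 sqrt_le_D)
qed

lemma Sn_nonneg: "Sn \<ge> 0" using L2_le(2)[of 0 0] by simp

lemma abs_setint: "set_integrable lborel {a..b} (\<lambda>x. \<bar>d \<alpha> x\<bar>)"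
proof -
  have i1: "integrable lborel (\<lambda>x. indicator {a..b} x *\<^sub>R (1::real))"
    using borel_integrable_atLeastAtMost'[of a b "\<lambda>_. 1::real"] unfolding set_integrable_def by simp
  have i2: "integrable lborel (\<lambda>x. indicator {a..b} x *\<^sub>R (d \<alpha> x)\<^sup>2)"
    using sq_setint unfolding set_integrable_def .
  have "integrable lborel (\<lambda>x. indicator {a..b} x *\<^sub>R (1::real) + indicator {a..b} x *\<^sub>R (d \<alpha> x)\<^sup>2)"
    by (rule Bochner_Integration.integrable_add[OF i1 i2])
  then have f: "set_integrable lborel {a..b} (\<lambda>x. 1 + (d \<alpha> x)\<^sup>2)"
    unfolding set_integrable_def by (simp add: algebra_simps)
  have g: "set_borel_measurable lborel {a..b} (d \<alpha>)"
    unfolding set_borel_measurable_def using meas by measurable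
  have "set_integrable lborel {a..b} (d \<alpha>)"
  proof (rule set_integrable_bound[OF f g], rule AE_I2, intro impI)
    fix x
    have "\<bar>d \<alpha> x\<bar> \<le> 1 + (d \<alpha> x)\<^sup>2"
    proof (cases "\<bar>d \<alpha> x\<bar> \<le> 1")
      case True then show ?thesis by (smt (verit) zero_le_power2)
    next
      case False
      then have "\<bar>d \<alpha> x\<bar> * 1 \<le> \<bar>d \<alpha> x\<bar> * \<bar>d \<alpha> x\<bar>" by (intro mult_left_mono) auto
      then show ?thesis by (simp add: power2_eq_square abs_mult_self_eq)
    qed
    then show "norm (d \<alpha> x) \<le> norm (1 + (d \<alpha> x)\<^sup>2)" by simp
  qed
  then show ?thesis by (rule set_integrable_abs)
qed

lemma abs_int_on: "(\<lambda>x. \<bar>d \<alpha> x\<bar>) integrable_on {a..b}"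
  by (rule set_borel_integral_eq_integral(1)[OF abs_setint])

lemma sq_int_on: "(\<lambda>x. (d \<alpha> x)\<^sup>2) integrable_on {a..b}"
  by (rule set_borel_integral_eq_integral(1)[OF sq_setint])

lemma L1_bound:
  assumes ab: "a \<le> b" and w: "w > 0" "Sn \<le> w"
  shows "integral {a..b} (\<lambda>x. \<bar>d \<alpha> x\<bar>) \<le> sqrt (b - a) * w"
proof (cases "a = b")
  case True then show ?thesis by simp
next
  case False
  then have ab': "b - a > 0" using ab by simp
  define c where "c = sqrt (b - a) / w"
  have c: "c > 0" using ab' w unfolding c_def by simp
  have pt: "\<bar>y\<bar> \<le> (c * y\<^sup>2 + 1 / c) / 2" for y :: real
  proof -
    have "0 \<le> (c * \<bar>y\<bar> - 1)\<^sup>2" by simp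
    then have "2 * c * \<bar>y\<bar> \<le> c\<^sup>2 * y\<^sup>2 + 1" by (simp add: power2_eq_square algebra_simps abs_mult_self_eq)
    then have "2 * c * \<bar>y\<bar> / c \<le> (c\<^sup>2 * y\<^sup>2 + 1) / c" using c by (intro divide_right_mono) auto
    then show ?thesis using c by (simp add: field_simps power2_eq_square)
  qed
  have cint: "(\<lambda>x. c * (d \<alpha> x)\<^sup>2) integrable_on {a..b}" using integrable_on_cmult_right[OF sq_int_on, of c a b] by (simp add: mult.commute)
  have "integral {a..b} (\<lambda>x. \<bar>d \<alpha> x\<bar>) \<le> integral {a..b} (\<lambda>x. (c * (d \<alpha> x)\<^sup>2 + 1 / c) / 2)"
  proof (rule integral_le[OF abs_int_on])
    from cint show "(\<lambda>x. (c * (d \<alpha> x)\<^sup>2 + 1 / c) / 2) integrable_on {a..b}"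
      by (intro integrable_on_divide Henstock_Kurzweil_Integration.integrable_add) auto
  qed (rule pt)
  also have "\<dots> = (c * integral {a..b} (\<lambda>x. (d \<alpha> x)\<^sup>2) + (b - a) / c) / 2"
  proof -
    have "integral {a..b} (\<lambda>x. (c * (d \<alpha> x)\<^sup>2 + 1 / c) / 2) = integral {a..b} (\<lambda>x. c * (d \<alpha> x)\<^sup>2 + 1 / c) / 2"
      by (rule integral_divide)
    also have "integral {a..b} (\<lambda>x. c * (d \<alpha> x)\<^sup>2 + 1 / c) = integral {a..b} (\<lambda>x. c * (d \<alpha> x)\<^sup>2) + integral {a..b} (\<lambda>x. 1 / c)"
      by (rule Henstock_Kurzweil_Integration.integral_add[OF cint]) auto
    also have "integral {a..b} (\<lambda>x. c * (d \<alpha> x)\<^sup>2) = c * integral {a..b} (\<lambda>x. (d \<alpha> x)\<^sup>2)"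
      by (rule integral_mult_right)
    finally show ?thesis using ab by simp
  qed
  also have "\<dots> \<le> (c * w\<^sup>2 + (b - a) / c) / 2"
  proof -
    have "integral {a..b} (\<lambda>x. (d \<alpha> x)\<^sup>2) \<le> w\<^sup>2"
      using L2_le[OF ab] w by (smt (verit) power_mono)
    then show ?thesis using c by (simp add: divide_right_mono)
  qed
  also have "\<dots> = sqrt (b - a) * w"
    using w ab' unfolding c_def by (simp add: field_simps power2_eq_square real_sqrt_mult_self)
  finally show ?thesis .
qed

end

lemma cell_sum:
  fixes f :: "real \<Rightarrow> real"
  assumes h: "h \<ge> 0" and int: "f integrable_on {u..u + real n * h}"
  shows "(\<Sum>j<n. integral {u + real j * h..u + real j * h + h} f) = integral {u..u + real n * h} f"
  using int
proof (induction n)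
  case 0 then show ?case by simp
next
  case (Suc n)
  have sub: "{u..u + real n * h} \<subseteq> {u..u + real (Suc n) * h}" using h by (auto simp: algebra_simps)
  have IH: "(\<Sum>j<n. integral {u + real j * h..u + real j * h + h} f) = integral {u..u + real n * h} f"
    using Suc.IH integrable_subinterval_real[OF Suc.prems sub] by blast
  have e: "u + real n * h + h = u + real (Suc n) * h" by (simp add: algebra_simps)
  have "integral {u..u + real n * h} f + integral {u + real n * h..u + real (Suc n) * h} f = integral {u..u + real (Suc n) * h} f"
    by (rule Henstock_Kurzweil_Integration.integral_combine[OF _ _ Suc.prems]) (use h in \<open>auto simp: algebra_simps\<close>)
  then show ?case using IH by (simp add: e del: of_nat_Suc)
qed

definition Qk :: "real \<Rightarrow> nat \<Rightarrow> real \<Rightarrow> real \<Rightarrow> real" where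
  "Qk h k c x = h ^ k * Pk k ((x - c) / h)"

lemma Qk_deriv:
  assumes h: "h > 0" and x: "x \<in> {c..c+h}"
  shows "(Qk h (Suc k) c has_real_derivative Qk h k c x) (at x within {c..c+h})"
proof -
  have t: "(x - c) / h \<in> {0..1}" using x h by (auto simp: field_simps)
  have d1: "((\<lambda>x. (x - c) / h) has_real_derivative 1 / h) (at x within {c..c+h})"
    using h by (auto intro!: derivative_eq_intros)
  have img: "(\<lambda>x. (x - c) / h) ` {c..c+h} \<subseteq> {0..1}" using h by (auto simp: field_simps)
  have d2: "(Pk (Suc k) has_real_derivative Pk k ((x - c) / h)) (at ((x - c) / h) within (\<lambda>x. (x - c) / h) ` {c..c+h})"
    by (rule DERIV_subset[OF Pk_deriv[OF t] img])
  have "((Pk (Suc k) \<circ> (\<lambda>x. (x - c) / h)) has_real_derivative Pk k ((x - c) / h) * (1 / h)) (at x within {c..c+h})"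
    by (rule DERIV_image_chain[OF d2 d1])
  then have "((\<lambda>x. h ^ Suc k * Pk (Suc k) ((x - c) / h)) has_real_derivative h ^ Suc k * (Pk k ((x - c) / h) * (1 / h))) (at x within {c..c+h})"
    by (intro DERIV_cmult) (simp add: o_def)
  moreover have "h ^ Suc k * (Pk k ((x - c) / h) * (1 / h)) = Qk h k c x"
    using h unfolding Qk_def by (simp add: field_simps)
  ultimately show ?thesis unfolding Qk_def by simp
qed

lemma Qk_cont:
  assumes h: "h > 0"
  shows "continuous_on {c..c+h} (Qk h k c)"
proof -
  have img: "(\<lambda>x. (x - c) / h) ` {c..c+h} \<subseteq> {0..1}" using h by (auto simp: field_simps)
  have "continuous_on {c..c+h} (Pk k \<circ> (\<lambda>x. (x - c) / h))"
    by (rule continuous_on_compose[OF _ continuous_on_subset[OF Pk_cont img]]) (use h in \<open>auto intro!: continuous_intros\<close>)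
  then show ?thesis unfolding Qk_def o_def by (intro continuous_intros) auto
qed

lemma Qk_bound:
  assumes h: "h > 0" and x: "x \<in> {c..c+h}"
  shows "\<bar>Qk h k c x\<bar> \<le> h ^ k * 2 ^ k"
proof -
  have t: "(x - c) / h \<in> {0..1}" using x h by (auto simp: field_simps)
  show ?thesis unfolding Qk_def using Pk_bound[OF t, of k] h
    by (simp add: abs_mult mult_left_mono)
qed

lemma Qk_ends: "h > 0 \<Longrightarrow> Qk h k c c = h ^ k * Pk k 0" "h > 0 \<Longrightarrow> Qk h k c (c + h) = h ^ k * Pk k 1"
  unfolding Qk_def by simp_all

lemma Qk_int:
  assumes h: "h > 0"
  shows "(Qk h k c has_integral (h ^ Suc k * (Pk (Suc k) 1 - Pk (Suc k) 0))) {c..c+h}"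
proof -
  have "(Qk h k c has_integral (Qk h (Suc k) c (c + h) - Qk h (Suc k) c c)) {c..c+h}"
    using h Qk_deriv[OF h] by (intro fundamental_theorem_of_calculus) (auto simp: has_real_derivative_iff_has_vector_derivative[symmetric])
  then show ?thesis using h by (simp add: Qk_ends right_diff_distrib)
qed


context setting begin

lemma cell_ibp:
  assumes h: "h > 0" and k: "Suc k < \<alpha>"
  shows "integral {c..c+h} (\<lambda>x. Qk h k c x * d k x) =
     h ^ Suc k * (Pk (Suc k) 1 * d k (c + h) - Pk (Suc k) 0 * d k c)
     - integral {c..c+h} (\<lambda>x. Qk h (Suc k) c x * d (Suc k) x)"
proof -
  have D: "((\<lambda>x. Qk h (Suc k) c x * d k x) has_real_derivative (Qk h k c x * d k x + Qk h (Suc k) c x * d (Suc k) x)) (at x within {c..c+h})"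
    if x: "x \<in> {c..c+h}" for x
  proof -
    have "(d k has_real_derivative d (Suc k) x) (at x within {c..c+h})"
      using dderiv[OF k] by (rule DERIV_subset) auto
    from DERIV_mult[OF Qk_deriv[OF h x] this] show ?thesis by (simp add: mult.commute)
  qed
  have ftc: "((\<lambda>x. Qk h k c x * d k x + Qk h (Suc k) c x * d (Suc k) x) has_integral
      (Qk h (Suc k) c (c + h) * d k (c + h) - Qk h (Suc k) c c * d k c)) {c..c+h}"
    using h D by (intro fundamental_theorem_of_calculus) (auto simp: has_real_derivative_iff_has_vector_derivative[symmetric])
  have i2: "(\<lambda>x. Qk h (Suc k) c x * d (Suc k) x) integrable_on {c..c+h}"
    by (intro integrable_continuous_real continuous_on_mult Qk_cont h dcont k)
  have "((\<lambda>x. (Qk h k c x * d k x + Qk h (Suc k) c x * d (Suc k) x) - Qk h (Suc k) c x * d (Suc k) x) has_integral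
      ((Qk h (Suc k) c (c + h) * d k (c + h) - Qk h (Suc k) c c * d k c) - integral {c..c+h} (\<lambda>x. Qk h (Suc k) c x * d (Suc k) x))) {c..c+h}"
    by (rule has_integral_diff[OF ftc integrable_integral[OF i2]])
  then have "((\<lambda>x. Qk h k c x * d k x) has_integral
      ((Qk h (Suc k) c (c + h) * d k (c + h) - Qk h (Suc k) c c * d k c) - integral {c..c+h} (\<lambda>x. Qk h (Suc k) c x * d (Suc k) x))) {c..c+h}"
    by simp
  then show ?thesis using h by (simp add: integral_unique Qk_ends algebra_simps)
qed

lemma cell_last:
  assumes h: "h > 0" and m: "Suc m = \<alpha>" and q: "continuous_on {c..c+h} q" and B: "\<And>x. x \<in> {c..c+h} \<Longrightarrow> \<bar>q x\<bar> \<le> B"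
  shows "(\<lambda>x. q x * (d m x - d m c)) integrable_on {c..c+h}"
    "\<bar>integral {c..c+h} (\<lambda>x. q x * (d m x - d m c))\<bar> \<le> B * h * integral {c..c+h} (\<lambda>x. \<bar>d \<alpha> x\<bar>)"
proof -
  have m_lt: "m < \<alpha>" using m by simp
  show int: "(\<lambda>x. q x * (d m x - d m c)) integrable_on {c..c+h}"
    by (intro integrable_continuous_real continuous_on_mult q continuous_on_diff dcont[OF m_lt] continuous_on_const)
  have B0: "B \<ge> 0" using B[of c] h by (smt (verit) atLeastAtMost_iff)
  let ?J = "integral {c..c+h} (\<lambda>x. \<bar>d \<alpha> x\<bar>)"
  have pt: "\<bar>d m x - d m c\<bar> \<le> ?J" if x: "x \<in> {c..c+h}" for x
  proof -
    have "(d \<alpha> has_integral (d m x - d m c)) {c..x}" using dftc[OF m_lt, of c x] x m by auto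
    then have "d m x - d m c = integral {c..x} (d \<alpha>)" by (simp add: integral_unique)
    also have "\<bar>\<dots>\<bar> \<le> integral {c..x} (\<lambda>x. \<bar>d \<alpha> x\<bar>)"
      using integral_norm_bound_integral[of "d \<alpha>" "{c..x}" "\<lambda>x. \<bar>d \<alpha> x\<bar>"] dint[OF m_lt, of c x] abs_int_on m by auto
    also have "\<dots> \<le> ?J"
      by (rule integral_subset_le) (use x abs_int_on in auto)
    finally show ?thesis .
  qed
  have "norm (integral {c..c+h} (\<lambda>x. q x * (d m x - d m c))) \<le> (B * ?J) * measure lborel {c..c+h}"
  proof (rule has_integral_bound[where f="\<lambda>x. q x * (d m x - d m c)", unfolded box_real])
    show "0 \<le> B * ?J" using B0 integral_nonneg[OF abs_int_on] by simp
    show "((\<lambda>x. q x * (d m x - d m c)) has_integral integral {c..c+h} (\<lambda>x. q x * (d m x - d m c))) {c..c+h}"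
      using int by (rule integrable_integral)
    fix x assume x: "x \<in> {c..c+h}"
    show "norm (q x * (d m x - d m c)) \<le> B * ?J"
      unfolding real_norm_def abs_mult using B[OF x] pt[OF x] B0 by (intro mult_mono) auto
  qed
  then show "\<bar>integral {c..c+h} (\<lambda>x. q x * (d m x - d m c))\<bar> \<le> B * h * ?J" using h by (simp add: algebra_simps)
qed

end

context setting begin

definition Sk :: "real \<Rightarrow> real \<Rightarrow> nat \<Rightarrow> nat \<Rightarrow> real" where
  "Sk u h n k = (\<Sum>j<n. integral {u + real j * h..u + real j * h + h} (\<lambda>x. Qk h k (u + real j * h) x * d k x))"

lemma node_suc: "u + real j * h + h = u + real (Suc j) * h"
  by (simp add: algebra_simps)

lemma sum_step:
  assumes h: "h > 0" and k: "Suc k < \<alpha>" "k \<ge> 1"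
  shows "Sk u h n k = h ^ Suc k * Pk (Suc k) 0 * (d k (u + real n * h) - d k u) - Sk u h n (Suc k)"
proof -
  have per: "Pk (Suc k) 1 = Pk (Suc k) 0" by (rule Pk_periodic) (use k in simp)
  have "Sk u h n k = (\<Sum>j<n. h ^ Suc k * Pk (Suc k) 0 * (d k (u + real (Suc j) * h) - d k (u + real j * h))
      - integral {u + real j * h..u + real j * h + h} (\<lambda>x. Qk h (Suc k) (u + real j * h) x * d (Suc k) x))"
  proof -
    have cj: "integral {c..c+h} (\<lambda>x. Qk h k c x * d k x) = h ^ Suc k * Pk (Suc k) 0 * (d k (c+h) - d k c)
       - integral {c..c+h} (\<lambda>x. Qk h (Suc k) c x * d (Suc k) x)" for c
      using cell_ibp[OF h k(1), of c] per by (simp add: right_diff_distrib mult.assoc)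
    show ?thesis unfolding Sk_def by (intro sum.cong refl) (subst cj, simp only: node_suc)
  qed
  also have "\<dots> = h ^ Suc k * Pk (Suc k) 0 * (\<Sum>j<n. d k (u + real (Suc j) * h) - d k (u + real j * h)) - Sk u h n (Suc k)"
    unfolding Sk_def by (simp add: sum_subtractf sum_distrib_left right_diff_distrib)
  also have "(\<Sum>j<n. d k (u + real (Suc j) * h) - d k (u + real j * h)) = d k (u + real n * h) - d k u"
    using sum_lessThan_telescope[of "\<lambda>j. d k (u + real j * h)" n] by simp
  finally show ?thesis .
qed

lemma sum_step0:
  assumes h: "h > 0" and a2: "\<alpha> \<ge> 2"
  shows "integral {u..u + real n * h} (d 0) = h * (\<Sum>j<n. d 0 (u + real j * h)) + h / 2 * (d 0 (u + real n * h) - d 0 u) - Sk u h n 1"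
proof -
  have k: "Suc 0 < \<alpha>" using a2 by simp
  have c0: "continuous_on {u..u + real n * h} (d 0)" using dcont alpha by simp
  have "integral {u..u + real n * h} (d 0) = (\<Sum>j<n. integral {u + real j * h..u + real j * h + h} (d 0))"
    using cell_sum[of h "d 0" u n] h integrable_continuous_real[OF c0] by simp
  also have "\<dots> = Sk u h n 0" unfolding Sk_def Qk_def by simp
  also have "\<dots> = (\<Sum>j<n. h * d 0 (u + real j * h) + h / 2 * (d 0 (u + real (Suc j) * h) - d 0 (u + real j * h))
      - integral {u + real j * h..u + real j * h + h} (\<lambda>x. Qk h 1 (u + real j * h) x * d 1 x))"
  proof -
    have cj: "integral {c..c+h} (\<lambda>x. Qk h 0 c x * d 0 x) = h * d 0 c + h / 2 * (d 0 (c+h) - d 0 c)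
       - integral {c..c+h} (\<lambda>x. Qk h 1 c x * d 1 x)" for c
      using cell_ibp[OF h k, of c] by (simp add: Pk1' field_simps)
    show ?thesis unfolding Sk_def by (intro sum.cong refl) (subst cj, simp only: node_suc One_nat_def)
  qed
  also have "\<dots> = h * (\<Sum>j<n. d 0 (u + real j * h)) + h / 2 * (\<Sum>j<n. d 0 (u + real (Suc j) * h) - d 0 (u + real j * h)) - Sk u h n 1"
    unfolding Sk_def by (simp add: sum_subtractf sum.distrib sum_distrib_left right_diff_distrib)
  also have "(\<Sum>j<n. d 0 (u + real (Suc j) * h) - d 0 (u + real j * h)) = d 0 (u + real n * h) - d 0 u"
    using sum_lessThan_telescope[of "\<lambda>j. d 0 (u + real j * h)" n] by simp
  finally show ?thesis .
qed

lemma absint_sum: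
  assumes h: "h > 0"
  shows "(\<Sum>j<n. integral {u + real j * h..u + real j * h + h} (\<lambda>x. \<bar>d \<alpha> x\<bar>)) = integral {u..u + real n * h} (\<lambda>x. \<bar>d \<alpha> x\<bar>)"
  using cell_sum[of h "\<lambda>x. \<bar>d \<alpha> x\<bar>" u n] h abs_int_on by simp

lemma sum_last:
  assumes h: "h > 0" and m: "Suc m = \<alpha>" and a2: "\<alpha> \<ge> 2"
  shows "\<bar>Sk u h n m\<bar> \<le> h ^ \<alpha> * 2 ^ \<alpha> * integral {u..u + real n * h} (\<lambda>x. \<bar>d \<alpha> x\<bar>)"
proof -
  have cellb: "\<bar>integral {c..c+h} (\<lambda>x. Qk h m c x * d m x)\<bar> \<le> h ^ m * 2 ^ m * h * integral {c..c+h} (\<lambda>x. \<bar>d \<alpha> x\<bar>)" for c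
  proof -
    have int0: "(Qk h m c has_integral 0) {c..c+h}"
          proof -
      have "Pk (Suc m) 1 = Pk (Suc m) 0" by (rule Pk_periodic) (use a2 m in simp)
      then show ?thesis using Qk_int[OF h, of m c] by simp
    qed
    have iq: "(\<lambda>x. Qk h m c x * d m c) integrable_on {c..c+h}"
    proof -
      have "Qk h m c integrable_on {c..c+h}" using int0 by (auto simp: integrable_on_def)
      from integrable_on_cmult_right[OF this, of "d m c"] show ?thesis by simp
    qed
    have L: "(\<lambda>x. Qk h m c x * (d m x - d m c)) integrable_on {c..c+h}"
      "\<bar>integral {c..c+h} (\<lambda>x. Qk h m c x * (d m x - d m c))\<bar> \<le> h ^ m * 2 ^ m * h * integral {c..c+h} (\<lambda>x. \<bar>d \<alpha> x\<bar>)"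
      using cell_last[OF h m Qk_cont[OF h] Qk_bound[OF h]] by auto
    have "integral {c..c+h} (\<lambda>x. Qk h m c x * d m x) = integral {c..c+h} (\<lambda>x. Qk h m c x * (d m x - d m c) + Qk h m c x * d m c)"
      by (simp add: algebra_simps)
    also have "\<dots> = integral {c..c+h} (\<lambda>x. Qk h m c x * (d m x - d m c)) + integral {c..c+h} (\<lambda>x. Qk h m c x * d m c)"
      by (rule Henstock_Kurzweil_Integration.integral_add[OF L(1) iq])
    also have "integral {c..c+h} (\<lambda>x. Qk h m c x * d m c) = integral {c..c+h} (Qk h m c) * d m c"
      by simp
    also have "integral {c..c+h} (Qk h m c) = 0" using int0 by (rule integral_unique)
    finally show ?thesis using L(2) by simp
  qed
  have "\<bar>Sk u h n m\<bar> \<le> (\<Sum>j<n. \<bar>integral {u + real j * h..u + real j * h + h} (\<lambda>x. Qk h m (u + real j * h) x * d m x)\<bar>)"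
    unfolding Sk_def by (rule sum_abs)
  also have "\<dots> \<le> (\<Sum>j<n. h ^ m * 2 ^ m * h * integral {u + real j * h..u + real j * h + h} (\<lambda>x. \<bar>d \<alpha> x\<bar>))"
    by (intro sum_mono cellb)
  also have "\<dots> = h ^ m * 2 ^ m * h * integral {u..u + real n * h} (\<lambda>x. \<bar>d \<alpha> x\<bar>)"
    using absint_sum[OF h, of u n] by (simp add: sum_distrib_left[symmetric])
  also have "\<dots> \<le> h ^ \<alpha> * 2 ^ \<alpha> * integral {u..u + real n * h} (\<lambda>x. \<bar>d \<alpha> x\<bar>)"
  proof -
    have J0: "integral {u..u + real n * h} (\<lambda>x. \<bar>d \<alpha> x\<bar>) \<ge> 0" by (rule integral_nonneg[OF abs_int_on]) auto
    have "h ^ m * 2 ^ m * h = h ^ \<alpha> * 2 ^ m" using m[symmetric] by (simp add: algebra_simps)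
    also have "\<dots> \<le> h ^ \<alpha> * 2 ^ \<alpha>" using h m by (intro mult_left_mono) auto
    finally show ?thesis using J0 by (intro mult_right_mono) auto
  qed
  finally show ?thesis .
qed

lemma alpha1_bound:
  assumes h: "h > 0" and a1: "\<alpha> = 1"
  shows "\<bar>integral {u..u + real n * h} (d 0) - h * (\<Sum>j<n. d 0 (u + real j * h))\<bar> \<le> h * integral {u..u + real n * h} (\<lambda>x. \<bar>d \<alpha> x\<bar>)"
proof -
  have m: "Suc 0 = \<alpha>" using a1 by simp
  have c0: "continuous_on {u..u + real n * h} (d 0)" using dcont alpha by simp
  have cellb: "\<bar>integral {c..c+h} (d 0) - h * d 0 c\<bar> \<le> h * integral {c..c+h} (\<lambda>x. \<bar>d \<alpha> x\<bar>)" for c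
  proof -
    have L: "(\<lambda>x. 1 * (d 0 x - d 0 c)) integrable_on {c..c+h}"
      "\<bar>integral {c..c+h} (\<lambda>x. 1 * (d 0 x - d 0 c))\<bar> \<le> 1 * h * integral {c..c+h} (\<lambda>x. \<bar>d \<alpha> x\<bar>)"
      using cell_last[OF h m, where q="\<lambda>_. 1" and c=c and B=1] by auto
    have i0: "d 0 integrable_on {c..c+h}" using dcont alpha by (intro integrable_continuous_real) auto
    have "integral {c..c+h} (\<lambda>x. 1 * (d 0 x - d 0 c)) = integral {c..c+h} (d 0) - integral {c..c+h} (\<lambda>x. d 0 c)"
      using Henstock_Kurzweil_Integration.integral_diff[OF i0 integrable_on_const[of "{c..c+h}"]] by simp
    then show ?thesis using L(2) h by simp
  qed
  have "integral {u..u + real n * h} (d 0) = (\<Sum>j<n. integral {u + real j * h..u + real j * h + h} (d 0))"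
    using cell_sum[of h "d 0" u n] h integrable_continuous_real[OF c0] by simp
  then have eq: "integral {u..u + real n * h} (d 0) - h * (\<Sum>j<n. d 0 (u + real j * h)) =
      (\<Sum>j<n. integral {u + real j * h..u + real j * h + h} (d 0) - h * d 0 (u + real j * h))"
    by (simp add: sum_subtractf sum_distrib_left)
  have "\<bar>\<Sum>j<n. integral {u + real j * h..u + real j * h + h} (d 0) - h * d 0 (u + real j * h)\<bar>
      \<le> (\<Sum>j<n. h * integral {u + real j * h..u + real j * h + h} (\<lambda>x. \<bar>d \<alpha> x\<bar>))"
    by (rule order_trans[OF sum_abs sum_mono]) (rule cellb)
  also have "\<dots> = h * integral {u..u + real n * h} (\<lambda>x. \<bar>d \<alpha> x\<bar>)"
    using absint_sum[OF h, of u n] by (simp add: sum_distrib_left[symmetric])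
  finally show ?thesis unfolding eq .
qed

end

context setting begin

lemma Sk_rec_bound:
  assumes h: "h > 0" "h \<le> Hm" and Hm: "Hm \<ge> 1" and a2: "\<alpha> \<ge> 2" and b0: "\<beta> \<ge> 0"
    and bu: "\<And>k. k < \<alpha> \<Longrightarrow> \<bar>d k u\<bar> \<le> \<beta>" and bv: "\<And>k. k < \<alpha> \<Longrightarrow> \<bar>d k (u + real n * h)\<bar> \<le> \<beta>"
    and i: "i \<le> \<alpha> - 2"
  shows "\<bar>Sk u h n (\<alpha> - 1 - i)\<bar> \<le> 2 * real i * Hm ^ \<alpha> * 2 ^ \<alpha> * \<beta> + h ^ \<alpha> * 2 ^ \<alpha> * integral {u..u + real n * h} (\<lambda>x. \<bar>d \<alpha> x\<bar>)"
  using i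
proof (induction i)
  case 0
  have m: "Suc (\<alpha> - 1) = \<alpha>" using a2 by simp
  show ?case using sum_last[OF h(1) m a2, of u n] by simp
next
  case (Suc i)
  define k where "k = \<alpha> - 1 - Suc i"
  have k: "Suc k < \<alpha>" "k \<ge> 1" using Suc.prems a2 unfolding k_def by auto
  have k1: "\<alpha> - 1 - i = Suc k" using Suc.prems a2 unfolding k_def by auto
  have IH: "\<bar>Sk u h n (Suc k)\<bar> \<le> 2 * real i * Hm ^ \<alpha> * 2 ^ \<alpha> * \<beta> + h ^ \<alpha> * 2 ^ \<alpha> * integral {u..u + real n * h} (\<lambda>x. \<bar>d \<alpha> x\<bar>)"
    using Suc.IH Suc.prems k1 by simp
  have st: "Sk u h n k = h ^ Suc k * Pk (Suc k) 0 * (d k (u + real n * h) - d k u) - Sk u h n (Suc k)"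
    by (rule sum_step[OF h(1) k])
  have kk: "k < \<alpha>" using k by simp
  have hp: "h ^ Suc k \<le> Hm ^ \<alpha>"
  proof -
    have "h ^ Suc k \<le> Hm ^ Suc k" using h by (intro power_mono) auto
    also have "\<dots> \<le> Hm ^ \<alpha>" using Hm k by (intro power_increasing) auto
    finally show ?thesis .
  qed
  have pb: "\<bar>Pk (Suc k) 0\<bar> \<le> 2 ^ \<alpha>"
  proof -
    have "\<bar>Pk (Suc k) 0\<bar> \<le> 2 ^ Suc k" using Pk_bound[of 0 "Suc k"] by simp
    also have "(2::real) ^ Suc k \<le> 2 ^ \<alpha>" using k by (intro power_increasing) auto
    finally show ?thesis .
  qed
  have db: "\<bar>d k (u + real n * h) - d k u\<bar> \<le> 2 * \<beta>" using bu[OF kk] bv[OF kk] by linarith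
  have "\<bar>h ^ Suc k * Pk (Suc k) 0 * (d k (u + real n * h) - d k u)\<bar> = h ^ Suc k * \<bar>Pk (Suc k) 0\<bar> * \<bar>d k (u + real n * h) - d k u\<bar>"
    using h by (simp add: abs_mult)
  also have "\<dots> \<le> Hm ^ \<alpha> * 2 ^ \<alpha> * (2 * \<beta>)"
    using hp pb db h b0 by (intro mult_mono) auto
  finally have T1: "\<bar>h ^ Suc k * Pk (Suc k) 0 * (d k (u + real n * h) - d k u)\<bar> \<le> 2 * Hm ^ \<alpha> * 2 ^ \<alpha> * \<beta>"
    by (simp add: algebra_simps)
  have "\<bar>Sk u h n k\<bar> \<le> 2 * Hm ^ \<alpha> * 2 ^ \<alpha> * \<beta> + \<bar>Sk u h n (Suc k)\<bar>" unfolding st using T1 by linarith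
  also have "\<dots> \<le> 2 * real (Suc i) * Hm ^ \<alpha> * 2 ^ \<alpha> * \<beta> + h ^ \<alpha> * 2 ^ \<alpha> * integral {u..u + real n * h} (\<lambda>x. \<bar>d \<alpha> x\<bar>)"
    using IH by (simp add: algebra_simps)
  finally show ?case unfolding k_def .
qed

lemma core_bound:
  assumes h: "h > 0" "h \<le> Hm" and Hm: "Hm \<ge> 1" and b0: "\<beta> \<ge> 0"
    and bu: "\<And>k. k < \<alpha> \<Longrightarrow> \<bar>d k u\<bar> \<le> \<beta>" and bv: "\<And>k. k < \<alpha> \<Longrightarrow> \<bar>d k (u + real n * h)\<bar> \<le> \<beta>"
  shows "\<bar>integral {u..u + real n * h} (d 0) - h * (\<Sum>j<n. d 0 (u + real j * h))\<bar>
     \<le> (Hm + 2 * real \<alpha> * Hm ^ \<alpha> * 2 ^ \<alpha>) * \<beta> + h ^ \<alpha> * 2 ^ \<alpha> * integral {u..u + real n * h} (\<lambda>x. \<bar>d \<alpha> x\<bar>)"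
proof (cases "\<alpha> = 1")
  case True
  have J0: "integral {u..u + real n * h} (\<lambda>x. \<bar>d \<alpha> x\<bar>) \<ge> 0" by (rule integral_nonneg[OF abs_int_on]) auto
  have "h * integral {u..u + real n * h} (\<lambda>x. \<bar>d \<alpha> x\<bar>) \<le> h ^ \<alpha> * 2 ^ \<alpha> * integral {u..u + real n * h} (\<lambda>x. \<bar>d \<alpha> x\<bar>)"
    using True J0 h by simp
  moreover have "(Hm + 2 * real \<alpha> * Hm ^ \<alpha> * 2 ^ \<alpha>) * \<beta> \<ge> 0" using Hm b0 by simp
  ultimately show ?thesis using alpha1_bound[OF h(1) True, of u n] by linarith
next
  case False
  then have a2: "\<alpha> \<ge> 2" using alpha by simp
  have e: "\<alpha> - 1 - (\<alpha> - 2) = 1" using a2 by simp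
  have S1: "\<bar>Sk u h n 1\<bar> \<le> 2 * real (\<alpha> - 2) * Hm ^ \<alpha> * 2 ^ \<alpha> * \<beta> + h ^ \<alpha> * 2 ^ \<alpha> * integral {u..u + real n * h} (\<lambda>x. \<bar>d \<alpha> x\<bar>)"
    using Sk_rec_bound[OF h Hm a2 b0 bu bv, of "\<alpha> - 2"] e by simp
  have eq: "integral {u..u + real n * h} (d 0) - h * (\<Sum>j<n. d 0 (u + real j * h)) = h / 2 * (d 0 (u + real n * h) - d 0 u) - Sk u h n 1"
    using sum_step0[OF h(1) a2, of u n] by simp
  have "\<bar>h / 2 * (d 0 (u + real n * h) - d 0 u)\<bar> \<le> Hm * \<beta>"
  proof -
    have "\<bar>d 0 (u + real n * h) - d 0 u\<bar> \<le> 2 * \<beta>" using bu[of 0] bv[of 0] alpha by linarith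
    then have "\<bar>h / 2 * (d 0 (u + real n * h) - d 0 u)\<bar> \<le> h / 2 * (2 * \<beta>)" using h by (simp add: abs_mult mult_left_mono)
    also have "\<dots> \<le> Hm * \<beta>" using h b0 by (simp add: mult_right_mono)
    finally show ?thesis .
  qed
  moreover have "2 * real (\<alpha> - 2) * Hm ^ \<alpha> * 2 ^ \<alpha> * \<beta> \<le> 2 * real \<alpha> * Hm ^ \<alpha> * 2 ^ \<alpha> * \<beta>"
    using Hm b0 by (intro mult_right_mono) auto
  ultimately show ?thesis unfolding eq using S1 by (simp add: algebra_simps)
qed

end

lemma tail_bound:
  fixes f :: "real \<Rightarrow> real"
  assumes cf: "continuous_on UNIV f" and a: "a > 0"
    and bd: "\<And>x. x \<ge> T \<Longrightarrow> \<bar>f x\<bar> \<le> B * exp (-(a * (x - T)))"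
  shows "f absolutely_integrable_on {T..}" "\<bar>integral {T..} f\<bar> \<le> B / a"
proof -
  have eb: "B * exp (-(a * (x - T))) = (B * exp (a * T)) * exp (- a * x)" for x
    by (simp add: algebra_simps exp_add[symmetric])
  have gi: "((\<lambda>x. (B * exp (a * T)) * exp (- a * x)) has_integral (B * exp (a * T)) * (exp (- a * T) / a)) {T..}"
    using has_integral_exp_minus_to_infinity[OF a, of T] by (rule has_integral_mult_right)
  have val: "(B * exp (a * T)) * (exp (- a * T) / a) = B / a"
    by (simp add: exp_minus field_simps)
  have gi': "((\<lambda>x. B * exp (-(a * (x - T)))) has_integral B / a) {T..}"
    using gi unfolding val eb .
  have meas: "f \<in> borel_measurable (lebesgue_on {T..})"
    by (rule continuous_imp_measurable_on_sets_lebesgue[OF continuous_on_subset[OF cf]]) auto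
  have fi: "f integrable_on {T..}"
    by (rule measurable_bounded_by_integrable_imp_integrable[OF meas _ _]) (use gi' bd in \<open>auto simp: integrable_on_def\<close>)
  show "f absolutely_integrable_on {T..}"
    by (rule absolutely_integrable_integrable_bound[OF _ fi, of "\<lambda>x. B * exp (-(a * (x - T)))"]) (use gi' bd in \<open>auto simp: integrable_on_def\<close>)
  have "norm (integral {T..} f) \<le> integral {T..} (\<lambda>x. B * exp (-(a * (x - T))))"
    by (rule integral_norm_bound_integral[OF fi]) (use gi' bd in \<open>auto simp: integrable_on_def\<close>)
  moreover have "integral {T..} (\<lambda>x. B * exp (-(a * (x - T)))) = B / a" by (rule integral_unique[OF gi'])
  ultimately show "\<bar>integral {T..} f\<bar> \<le> B / a" by (simp only: real_norm_def)
qed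

lemma gauss_le:
  fixes c T x :: real
  assumes "c \<ge> 0"
  shows "exp (-(c * x\<^sup>2 / 2)) \<le> exp (-(c * T\<^sup>2 / 2)) * exp (-((c * T) * (x - T)))"
proof -
  have "c * T\<^sup>2 / 2 + (c * T) * (x - T) \<le> c * x\<^sup>2 / 2"
  proof -
    have "0 \<le> c * (x - T)\<^sup>2 / 2" using assms by simp
    then show ?thesis by (simp add: power2_eq_square algebra_simps)
  qed
  then have "exp (-(c * x\<^sup>2 / 2)) \<le> exp (-(c * T\<^sup>2 / 2) + -((c * T) * (x - T)))"
    by (subst exp_le_cancel_iff) linarith
  also have "\<dots> = exp (-(c * T\<^sup>2 / 2)) * exp (-((c * T) * (x - T)))" by (rule exp_add)
  finally show ?thesis .
qed

context setting begin

lemma whole_line: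
  assumes T: "T > 0"
  defines "c \<equiv> 1 - \<epsilon>"
  defines "\<beta> \<equiv> Dn * exp (-(c * T\<^sup>2 / 2))"
  shows "integrable lborel (d 0)"
    "\<bar>integral\<^sup>L lborel (d 0) - integral {-T..T} (d 0)\<bar> \<le> 2 * \<beta> / (c * T)"
proof -
  have c: "c > 0" using eps unfolding c_def by simp
  have a: "c * T > 0" using c T by simp
  have cg: "continuous_on UNIV (d 0)" using dcont alpha by simp
  have cg': "continuous_on UNIV (\<lambda>x. d 0 (- x))"
    by (rule continuous_on_compose2[OF cg]) (auto intro!: continuous_intros)
  have bd: "\<bar>d 0 x\<bar> \<le> \<beta> * exp (-((c * T) * (x - T)))" for x
  proof -
    have "\<bar>d 0 x\<bar> \<le> Dn * exp (-((1 - \<epsilon>) * x\<^sup>2 / 2))" using decay[of 0 x] alpha by simp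
    also have "\<dots> \<le> Dn * (exp (-(c * T\<^sup>2 / 2)) * exp (-((c * T) * (x - T))))"
      using gauss_le[of c x T] c Dn_nonneg unfolding c_def by (intro mult_left_mono) auto
    finally show ?thesis unfolding \<beta>_def by (simp add: mult.assoc)
  qed
  have bd': "\<bar>d 0 (- x)\<bar> \<le> \<beta> * exp (-((c * T) * (x - T)))" for x
  proof -
    have "\<bar>d 0 (-x)\<bar> \<le> Dn * exp (-((1 - \<epsilon>) * (-x)\<^sup>2 / 2))" using decay[of 0 "-x"] alpha by simp
    also have "\<dots> \<le> Dn * (exp (-(c * T\<^sup>2 / 2)) * exp (-((c * T) * (x - T))))"
      using gauss_le[of c x T] c Dn_nonneg unfolding c_def by (intro mult_left_mono) auto
    finally show ?thesis unfolding \<beta>_def by (simp add: mult.assoc)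
  qed
  note R = tail_bound[OF cg a bd] and L = tail_bound[OF cg' a bd']
  have refl: "d 0 absolutely_integrable_on {..-T} \<and> integral {..-T} (d 0) = integral {T..} (\<lambda>x. d 0 (- x))"
    using has_absolute_integral_reflect_real[of "{T..}" "{..-T}" "d 0" "integral {T..} (\<lambda>x. d 0 (- x))"] L(1)
    by force
  have M: "d 0 absolutely_integrable_on {-T..T}"
    by (rule absolutely_integrable_continuous_real[OF continuous_on_subset[OF cg]]) auto
  have U: "UNIV = ({..-T} \<union> {-T..T}) \<union> {T..}" using T by auto
  have ai: "d 0 absolutely_integrable_on UNIV"
    unfolding U by (intro absolutely_integrable_Un refl[THEN conjunct1] M R(1))
  have hi: "(d 0 has_integral (integral {..-T} (d 0) + integral {-T..T} (d 0) + integral {T..} (d 0))) UNIV"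
  proof -
    have n1: "negligible ({..-T} \<inter> {-T..T})"
    proof -
      have "{..-T} \<inter> {-T..T} = {-T}" using T by auto
      then show ?thesis by simp
    qed
    have n2: "negligible (({..-T} \<union> {-T..T}) \<inter> {T..})"
    proof -
      have "({..-T} \<union> {-T..T}) \<inter> {T..} = {T}" using T by auto
      then show ?thesis by simp
    qed
    have h1: "(d 0 has_integral (integral {..-T} (d 0) + integral {-T..T} (d 0))) ({..-T} \<union> {-T..T})"
      by (intro has_integral_Un n1 integrable_integral absolutely_integrable_on_def[THEN iffD1, THEN conjunct1] refl[THEN conjunct1] M)
    show ?thesis unfolding U
      by (intro has_integral_Un[OF h1] n2 integrable_integral absolutely_integrable_on_def[THEN iffD1, THEN conjunct1] R(1))
  qed
  have "integrable lebesgue (d 0)"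
    using ai unfolding set_integrable_def by simp
  moreover have "d 0 \<in> borel_measurable lborel"
    using borel_measurable_continuous_onI[OF cg] by simp
  ultimately show il: "integrable lborel (d 0)"
    using integrable_completion by blast
  have "integral\<^sup>L lborel (d 0) = integral UNIV (d 0)" using integral_lborel[OF il] by simp
  also have "\<dots> = integral {..-T} (d 0) + integral {-T..T} (d 0) + integral {T..} (d 0)"
    using hi by (rule integral_unique)
  finally have E: "integral\<^sup>L lborel (d 0) - integral {-T..T} (d 0) = integral {T..} (\<lambda>x. d 0 (- x)) + integral {T..} (d 0)"
    using refl by simp
  have B: "\<bar>integral {T..} (\<lambda>x. d 0 (- x)) + integral {T..} (d 0)\<bar> \<le> \<beta> / (c * T) + \<beta> / (c * T)"
    by (rule order_trans[OF abs_triangle_ineq add_mono[OF L(2) R(2)]])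
  have Q: "\<beta> / (c * T) + \<beta> / (c * T) = 2 * \<beta> / (c * T)" by (simp only: mult_2 add_divide_distrib)
  show "\<bar>integral\<^sup>L lborel (d 0) - integral {-T..T} (d 0)\<bar> \<le> 2 * \<beta> / (c * T)"
    unfolding E by (rule ord_le_eq_trans[OF B Q])
qed

end

lemma main_term:
  fixes K L T :: real and n a :: nat
  assumes K: "K > 0" and L: "L > 0" and n: "n > 0" and T: "T = sqrt (K * L)"
  shows "(2 * T / real n) ^ a * sqrt (2 * T) = 2 powr (real a + 1/2) * K powr (real a / 2 + 1/4) * L powr (real a / 2 + 1/4) / real n ^ a"
proof -
  have T0: "T > 0" using K L T by simp
  have "(2 * T / real n) ^ a * sqrt (2 * T) = (2 * T) ^ a * (2 * T) powr (1/2) / real n ^ a"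
    using T0 n by (simp add: power_divide powr_half_sqrt)
  also have "(2 * T) ^ a * (2 * T) powr (1/2) = (2 * T) powr (real a + 1/2)"
    using T0 by (simp add: powr_add powr_realpow)
  also have "\<dots> = 2 powr (real a + 1/2) * T powr (real a + 1/2)"
    using T0 by (simp add: powr_mult)
  also have "T powr (real a + 1/2) = (K * L) powr (real a / 2 + 1/4)"
  proof -
    have "T = (K * L) powr (1/2)" using K L T by (simp add: powr_half_sqrt)
    then have "T powr (real a + 1/2) = (K * L) powr (1/2 * (real a + 1/2))" by (simp add: powr_powr)
    also have "1/2 * (real a + 1/2) = real a / 2 + 1/4" by simp
    finally show ?thesis .
  qed
  also have "(K * L) powr (real a / 2 + 1/4) = K powr (real a / 2 + 1/4) * L powr (real a / 2 + 1/4)"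
    using K L by (simp add: powr_mult)
  finally show ?thesis by (simp add: mult.assoc)
qed


theorem proposition4p2:
  fixes \<alpha> :: nat and \<epsilon> :: real
  assumes "\<alpha> \<ge> 1" and "0 < \<epsilon>" and "\<epsilon> < 1"
  shows "\<exists>C::real. \<forall>(g::real \<Rightarrow> real) (d::nat \<Rightarrow> real \<Rightarrow> real) (n::nat).
     d 0 = g \<longrightarrow>
     (\<forall>\<tau><\<alpha>. \<forall>a b. abs_cont_on {a..b} (d \<tau>)) \<longrightarrow>
     (\<forall>\<tau><\<alpha>. AE x in lborel. (d \<tau> has_real_derivative d (Suc \<tau>) x) (at x)) \<longrightarrow>
     d \<alpha> \<in> borel_measurable lborel \<longrightarrow>
     integrable lborel (\<lambda>x. (d \<alpha> x)\<^sup>2) \<longrightarrow>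
     bdd_above (star_set \<alpha> d) \<longrightarrow>
     bdd_above (decay_set \<alpha> \<epsilon> d) \<longrightarrow>
     n \<ge> 2 \<longrightarrow>
     \<bar>integral\<^sup>L lborel g - trap_rule n (sqrt (2 / (1 - \<epsilon>) * real \<alpha> * ln (real n))) g\<bar>
       \<le> C * (star_norm \<alpha> d + decay_norm \<alpha> \<epsilon> d)
           * ln (real n) powr (real \<alpha> / 2 + 1 / 4) / real n ^ \<alpha>"
proof -
  define c where "c = 1 - \<epsilon>"
  define K where "K = 2 / (1 - \<epsilon>) * real \<alpha>"
  define p where "p = real \<alpha> / 2 + 1/4"
  define T0 where "T0 = sqrt (K * ln 2)"
  define Hm where "Hm = max 1 (2 * sqrt K)"
  define A where "A = Hm + 2 * real \<alpha> * Hm ^ \<alpha> * 2 ^ \<alpha>"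
  define C1 where "C1 = (2 / (c * T0) + A) / (ln 2) powr p"
  define C2 where "C2 = 2 ^ \<alpha> * (2 powr (real \<alpha> + 1/2) * K powr p)"
  have c: "c > 0" using assms unfolding c_def by simp
  have K: "K > 0" using assms unfolding K_def by simp
  have cK: "c * K = 2 * real \<alpha>" using assms unfolding c_def K_def by simp
  have T0: "T0 > 0" using K unfolding T0_def by simp
  have Hm1: "Hm \<ge> 1" unfolding Hm_def by simp
  have p0: "p \<ge> 0" unfolding p_def by simp
  have A0: "A \<ge> 0" using Hm1 unfolding A_def by simp
  have C10: "C1 \<ge> 0" using c T0 A0 unfolding C1_def by simp
  have C20: "C2 \<ge> 0" unfolding C2_def by simp
  show ?thesis
  proof (intro exI[of _ "C1 + C2"] allI impI)
    fix g :: "real \<Rightarrow> real" and d :: "nat \<Rightarrow> real \<Rightarrow> real" and n :: nat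
    assume g: "d 0 = g"
      and ac: "\<forall>\<tau><\<alpha>. \<forall>a b. abs_cont_on {a..b} (d \<tau>)"
      and der: "\<forall>\<tau><\<alpha>. AE x in lborel. (d \<tau> has_real_derivative d (Suc \<tau>) x) (at x)"
      and meas: "d \<alpha> \<in> borel_measurable lborel"
      and int2: "integrable lborel (\<lambda>x. (d \<alpha> x)\<^sup>2)"
      and bddS: "bdd_above (star_set \<alpha> d)"
      and bddD: "bdd_above (decay_set \<alpha> \<epsilon> d)"
      and n2: "n \<ge> 2"
    interpret setting \<alpha> \<epsilon> d
      using assms ac der meas int2 bddS bddD by unfold_locales auto
    define L where "L = ln (real n)"
    define T where "T = sqrt (2 / (1 - \<epsilon>) * real \<alpha> * ln (real n))"
    define W where "W = star_norm \<alpha> d + decay_norm \<alpha> \<epsilon> d"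
    have WSD: "W = Sn + Dn" unfolding W_def Sn_def Dn_def ..
    have W0: "W \<ge> 0" using WSD Sn_nonneg Dn_nonneg by simp
    have nr: "real n \<ge> 2" using n2 by simp
    have L: "L \<ge> ln 2" "L > 0" unfolding L_def using nr by auto
    have TKL: "T = sqrt (K * L)" unfolding T_def K_def L_def ..
    have main: "\<bar>integral\<^sup>L lborel g - trap_rule n T g\<bar> \<le> (C1 + C2) * W * L powr p / real n ^ \<alpha>"
    proof (cases "W = 0")
      case True
      then have D0: "Dn = 0" using WSD Sn_nonneg Dn_nonneg by linarith
      have gz: "g = (\<lambda>_. 0)"
      proof
        fix x show "g x = 0" using decay[of 0 x] alpha D0 g by simp
      qed
      show ?thesis using True by (simp add: gz trap_rule_def)
    next
      case False
      then have Wp: "W > 0" using W0 by simp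
      have KL0: "K * L \<ge> 0" using K L by simp
      have T: "T > 0" using TKL K L by simp
      have TT0: "T0 \<le> T" unfolding TKL T0_def using K L by simp
      define h where "h = 2 * T / real n"
      have h: "h > 0" using T nr unfolding h_def by simp
      have hHm: "h \<le> Hm"
      proof -
        have "L \<le> real n" using ln_le_minus_one[of "real n"] nr unfolding L_def by simp
        also have "real n \<le> real n ^ 2" using nr by (simp add: power2_eq_square)
        finally have "sqrt L \<le> real n" using nr by (metis abs_of_nonneg real_sqrt_abs real_sqrt_le_mono of_nat_0_le_iff)
        then have "sqrt K * sqrt L \<le> sqrt K * real n" using K by (intro mult_left_mono) auto
        then have "T \<le> sqrt K * real n" unfolding TKL by (simp add: real_sqrt_mult)
        then have "h \<le> 2 * sqrt K" unfolding h_def using nr by (simp add: field_simps)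
        then show ?thesis unfolding Hm_def by simp
      qed
      define \<beta> where "\<beta> = Dn * exp (-(c * T\<^sup>2 / 2))"
      have eT: "exp (-(c * T\<^sup>2 / 2)) = 1 / real n ^ \<alpha>"
      proof -
        have "T\<^sup>2 = K * L" unfolding TKL using KL0 by simp
        then have "c * T\<^sup>2 / 2 = real \<alpha> * L" using cK by (simp add: algebra_simps)
        then have "exp (-(c * T\<^sup>2 / 2)) = inverse (exp (real \<alpha> * L))" by (simp add: exp_minus)
        also have "exp (real \<alpha> * L) = real n ^ \<alpha>" unfolding L_def exp_of_nat_mult using nr by simp
        finally show ?thesis by (simp add: inverse_eq_divide)
      qed
      have \<beta>: "\<beta> = Dn / real n ^ \<alpha>" unfolding \<beta>_def eT by simp
      have \<beta>0: "\<beta> \<ge> 0" unfolding \<beta> using Dn_nonneg by simp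
      have end1: "- T + real n * h = T" unfolding h_def using nr by simp
      have bu: "\<bar>d k (- T)\<bar> \<le> \<beta>" if "k < \<alpha>" for k
        using decay[OF that, of "- T"] unfolding \<beta>_def c_def by simp
      have bv: "\<bar>d k (- T + real n * h)\<bar> \<le> \<beta>" if "k < \<alpha>" for k
        using decay[OF that, of T] unfolding \<beta>_def c_def end1 by simp
      have CB: "\<bar>integral {- T..T} (d 0) - h * (\<Sum>j<n. d 0 (- T + real j * h))\<bar>
         \<le> A * \<beta> + h ^ \<alpha> * 2 ^ \<alpha> * integral {- T..T} (\<lambda>x. \<bar>d \<alpha> x\<bar>)"
        using core_bound[OF h hHm Hm1 \<beta>0 bu bv] unfolding end1 A_def .
      have trap: "trap_rule n T (d 0) = h * (\<Sum>j<n. d 0 (- T + real j * h))"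
        unfolding trap_rule_def h_def by (simp add: algebra_simps)
      have WL: "\<bar>integral\<^sup>L lborel (d 0) - integral {- T..T} (d 0)\<bar> \<le> 2 * \<beta> / (c * T)"
        using whole_line(2)[OF T] unfolding \<beta>_def c_def .
      have J: "integral {- T..T} (\<lambda>x. \<bar>d \<alpha> x\<bar>) \<le> sqrt (2 * T) * W"
        using L1_bound[of "- T" T W] T Wp WSD Dn_nonneg by simp
      have E: "\<bar>integral\<^sup>L lborel g - trap_rule n T g\<bar> \<le> 2 * \<beta> / (c * T) + A * \<beta> + h ^ \<alpha> * 2 ^ \<alpha> * (sqrt (2 * T) * W)"
      proof -
        have "h ^ \<alpha> * 2 ^ \<alpha> * integral {- T..T} (\<lambda>x. \<bar>d \<alpha> x\<bar>) \<le> h ^ \<alpha> * 2 ^ \<alpha> * (sqrt (2 * T) * W)"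
          using J h by (intro mult_left_mono) auto
        then show ?thesis using WL CB unfolding g[symmetric] trap by linarith
      qed
      have P1: "2 * \<beta> / (c * T) + A * \<beta> \<le> C1 * W * L powr p / real n ^ \<alpha>"
      proof -
        have "2 * \<beta> / (c * T) \<le> 2 * \<beta> / (c * T0)"
          using \<beta>0 c T0 TT0 by (intro divide_left_mono mult_left_mono) auto
        then have "2 * \<beta> / (c * T) + A * \<beta> \<le> (2 / (c * T0) + A) * \<beta>" by (simp add: algebra_simps)
        also have "\<dots> \<le> (2 / (c * T0) + A) * (W / real n ^ \<alpha>)"
          unfolding \<beta> using c T0 A0 WSD Sn_nonneg nr by (intro mult_left_mono divide_right_mono) auto
        also have "2 / (c * T0) + A = C1 * ln 2 powr p" unfolding C1_def by simp
        also have "C1 * ln 2 powr p * (W / real n ^ \<alpha>) \<le> C1 * L powr p * (W / real n ^ \<alpha>)"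
          using C10 Wp L p0 by (intro mult_right_mono mult_left_mono powr_mono2) auto
        finally show ?thesis by (simp add: algebra_simps)
      qed
      have P2: "h ^ \<alpha> * 2 ^ \<alpha> * (sqrt (2 * T) * W) = C2 * W * L powr p / real n ^ \<alpha>"
      proof -
        have eq: "h ^ \<alpha> * sqrt (2 * T) = 2 powr (real \<alpha> + 1/2) * K powr p * L powr p / real n ^ \<alpha>"
          unfolding h_def p_def using main_term[OF K L(2) _ TKL, of n \<alpha>] nr by simp
        have "h ^ \<alpha> * 2 ^ \<alpha> * (sqrt (2 * T) * W) = (2 ^ \<alpha> * W) * (h ^ \<alpha> * sqrt (2 * T))"
          by (simp add: algebra_simps)
        also have "\<dots> = (2 ^ \<alpha> * W) * (2 powr (real \<alpha> + 1/2) * K powr p * L powr p / real n ^ \<alpha>)"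
          by (simp only: eq)
        also have "\<dots> = C2 * W * L powr p / real n ^ \<alpha>" unfolding C2_def by (simp add: field_simps)
        finally show ?thesis .
      qed
      have S: "(C1 + C2) * W * L powr p / real n ^ \<alpha> = C1 * W * L powr p / real n ^ \<alpha> + C2 * W * L powr p / real n ^ \<alpha>"
        by (simp add: add_divide_distrib distrib_right)
      show ?thesis unfolding S using E P1 P2 by linarith
    qed
    then show "\<bar>integral\<^sup>L lborel g - trap_rule n (sqrt (2 / (1 - \<epsilon>) * real \<alpha> * ln (real n))) g\<bar>
       \<le> (C1 + C2) * (star_norm \<alpha> d + decay_norm \<alpha> \<epsilon> d) * ln (real n) powr (real \<alpha> / 2 + 1 / 4) / real n ^ \<alpha>"
      unfolding T_def W_def L_def p_def .
  qed
qed


end
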